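(* Let $1\le i,j\le p$ and $e,e'\in\mathbb{F}_p$. Suppose $\varphi\colon B_{i,e}\to B_{j,e'}$ is a surjective group homomorphism compatible with the projections of both groups onto $G$ (so its kernel lies in the normal subgroup $A/A_i$ and it restricts to a $G$-equivariant surjection $A/A_i\to A/A_j$). Then $i>j$, $e'=0$, and $\ker\varphi=A_j/A_i$. Conversely, for every $i>j\ge1$ and every $e\in\mathbb{F}_p$, the quotient of $B_{i,e}$ by $A_j/A_i$ is $B_{j,0}$, giving such a surjection $B_{i,e}\to B_{j,0}$.
   Context: $p$ is an odd prime and $G=\langle\sigma\rangle$ is cyclic of order $p$. $A=\bigoplus_{k=0}^{p-1}\mathbb{F}_p\tau^k$ is the free $\mathbb{F}_p[G]$-module on $\tau$ with $\sigma$ acting by multiplication by $\tau$; for $1\le i<p$, $A_i$ is the $\mathbb{F}_p$-span of $(\tau-1)^k$, $i\le k\le p-1$, and $A_p=0$. For $1\le i\le p$ and $e\in\mathbb{F}_p$, $B_{i,e}$ denotes the group extension $1\to A/A_i\to B_{i,e}\to G\to1$ (with $A/A_i$ written additively as a normal subgroup) in which conjugation by a lift $\tilde\sigma$ of $\sigma$ acts on $A/A_i$ as multiplication by $\tau$ and $\tilde\sigma^p=e\,\overline{(\tau-1)}^{\,i-1}$; this determines $B_{i,e}$ up to equivalence. $B_{i,0}=(A/A_i)\rtimes G$. *)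

theory Defs
  imports "HOL-Algebra.Algebra"
begin

text \<open>Write u = tau - 1, so A = F_p[u]/(u^p) (as (tau-1)^p = tau^p - 1 in
characteristic p) and A_i = u^i A.  An element of A/A_i is encoded by its coordinate function
n \<mapsto> coefficient of u^n (values in {0..p-1}, zero for n \<ge> i).\<close>

definition Aquot :: "nat \<Rightarrow> nat \<Rightarrow> (nat \<Rightarrow> nat) set" where
  "Aquot p i = {a. (\<forall>n. a n < p) \<and> (\<forall>n\<ge>i. a n = 0)}"

definition addA :: "nat \<Rightarrow> (nat \<Rightarrow> nat) \<Rightarrow> (nat \<Rightarrow> nat) \<Rightarrow> (nat \<Rightarrow> nat)" where
  "addA p a b = (\<lambda>n. (a n + b n) mod p)"

text \<open>Multiplication by tau = 1 + u on A/A_i.\<close>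
definition tauA :: "nat \<Rightarrow> nat \<Rightarrow> (nat \<Rightarrow> nat) \<Rightarrow> (nat \<Rightarrow> nat)" where
  "tauA p i a = (\<lambda>n. if n < i then (a n + (if n = 0 then 0 else a (n - 1))) mod p else 0)"

definition cocyc :: "nat \<Rightarrow> nat \<Rightarrow> (nat \<Rightarrow> nat)" where
  "cocyc i e = (\<lambda>n. if n = i - 1 then e else 0)"

text \<open>B_{i,e}: the pair (a,k) stands for a * (lift of sigma)^k, 0 \<le> k < p.
  Conjugation by the lift acts as tau, and the p-th power of the lift is e u^(i-1).\<close>
definition multB :: "nat \<Rightarrow> nat \<Rightarrow> nat \<Rightarrow> ((nat \<Rightarrow> nat) \<times> nat) \<Rightarrow> ((nat \<Rightarrow> nat) \<times> nat) \<Rightarrow> ((nat \<Rightarrow> nat) \<times> nat)" where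
  "multB p i e x y =
     (addA p (addA p (fst x) ((tauA p i ^^ snd x) (fst y)))
         (if p \<le> snd x + snd y then cocyc i e else (\<lambda>_. 0)),
      (snd x + snd y) mod p)"

definition Bgrp :: "nat \<Rightarrow> nat \<Rightarrow> nat \<Rightarrow> ((nat \<Rightarrow> nat) \<times> nat) monoid" where
  "Bgrp p i e = \<lparr> carrier = Aquot p i \<times> {..<p}, monoid.mult = multB p i e,
     one = ((\<lambda>_. 0::nat), 0::nat) \<rparr>"

definition projG :: "((nat \<Rightarrow> nat) \<times> nat) \<Rightarrow> nat" where
  "projG x = snd x"

definition AjAi :: "nat \<Rightarrow> nat \<Rightarrow> nat \<Rightarrow> ((nat \<Rightarrow> nat) \<times> nat) set" where
  "AjAi p i j = {(a, 0) | a. a \<in> Aquot p i \<and> (\<forall>n<j. a n = 0)}"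

end

theory Submission
  imports Defs
begin


definition ZA :: "nat \<Rightarrow> nat" where "ZA = (\<lambda>_. 0)"
definition shA :: "nat \<Rightarrow> (nat \<Rightarrow> nat) \<Rightarrow> (nat \<Rightarrow> nat)" where
  "shA i a = (\<lambda>n. if n < i \<and> 0 < n then a (n - 1) else 0)"
definition dnA :: "(nat \<Rightarrow> nat) \<Rightarrow> (nat \<Rightarrow> nat)" where "dnA a = (\<lambda>n. a (Suc n))"
definition smulA :: "nat \<Rightarrow> nat \<Rightarrow> (nat \<Rightarrow> nat) \<Rightarrow> (nat \<Rightarrow> nat)" where
  "smulA p c a = (\<lambda>n. (c * a n) mod p)"
definition dA :: "nat \<Rightarrow> nat" where "dA = (\<lambda>n. if n = 0 then 1 else 0)"
definition trA :: "nat \<Rightarrow> (nat \<Rightarrow> nat) \<Rightarrow> (nat \<Rightarrow> nat)" where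
  "trA j a = (\<lambda>n. if n < j then a n else 0)"

lemma Aquot_iff: "a \<in> Aquot p i \<longleftrightarrow> (\<forall>n. a n < p) \<and> (\<forall>n\<ge>i. a n = 0)"
  by (simp add: Aquot_def)

lemma ZA_in: "0 < p \<Longrightarrow> ZA \<in> Aquot p i" by (simp add: Aquot_def ZA_def)

lemma addA_in: "0 < p \<Longrightarrow> a \<in> Aquot p i \<Longrightarrow> b \<in> Aquot p i \<Longrightarrow> addA p a b \<in> Aquot p i"
  by (simp add: Aquot_def addA_def)

lemma addA_ZA: "a \<in> Aquot p i \<Longrightarrow> addA p a ZA = a"
  by (auto simp: Aquot_def addA_def ZA_def)
lemma addA_ZA': "a \<in> Aquot p i \<Longrightarrow> addA p ZA a = a"
  by (auto simp: Aquot_def addA_def ZA_def)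
lemma addA_lam0: "a \<in> Aquot p i \<Longrightarrow> addA p a (\<lambda>_. 0) = a"
  using addA_ZA unfolding ZA_def by blast
lemma addA_comm: "addA p a b = addA p b a" by (simp add: addA_def add.commute)

lemma modcancel: "(x::nat) < p \<Longrightarrow> y < p \<Longrightarrow> (x + c) mod p = (y + c) mod p \<Longrightarrow> x = y"
proof -
  have *: "x = y" if "x \<le> y" "(x::nat) < p" "y < p" "(x + c) mod p = (y + c) mod p" for x y
  proof -
    have "p dvd (y + c) - (x + c)" using that by (metis mod_eq_dvd_iff_nat add_le_mono1)
    hence "p dvd y - x" by simp
    moreover have "y - x < p" using that by simp
    ultimately show ?thesis using that by (metis diff_is_0_eq dvd_imp_le le_antisym not_gr0 not_le)
  qed
  assume "x < p" "y < p" "(x + c) mod p = (y + c) mod p"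
  thus ?thesis using *[of x y] *[of y x] by (cases "x \<le> y") auto
qed

lemma addA_cancel:
  assumes "a \<in> Aquot p i" "b \<in> Aquot p i" "addA p a c = addA p b c"
  shows "a = b"
proof
  fix n
  have "(a n + c n) mod p = (b n + c n) mod p" using assms(3) unfolding addA_def by meson
  thus "a n = b n" using assms(1,2) modcancel[of "a n" p "b n" "c n"] by (simp add: Aquot_def)
qed

lemma tauA_ZA: "tauA p i ZA = ZA" by (simp add: tauA_def ZA_def fun_eq_iff)
lemma tauA_in: "0 < p \<Longrightarrow> tauA p i a \<in> Aquot p i" by (simp add: tauA_def Aquot_def)
lemma tauA_funpow_in: "0 < p \<Longrightarrow> a \<in> Aquot p i \<Longrightarrow> (tauA p i ^^ k) a \<in> Aquot p i"
  by (induction k) (auto simp: tauA_in)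

lemma shA_in: "a \<in> Aquot p i \<Longrightarrow> shA i a \<in> Aquot p i"
  by (auto simp: Aquot_def shA_def)
lemma dnA_in: "a \<in> Aquot p i \<Longrightarrow> dnA a \<in> Aquot p i"
  by (auto simp: Aquot_def dnA_def)
lemma smulA_in: "0 < p \<Longrightarrow> a \<in> Aquot p i \<Longrightarrow> smulA p c a \<in> Aquot p i"
  by (auto simp: Aquot_def smulA_def)
lemma dA_in: "1 < p \<Longrightarrow> 1 \<le> i \<Longrightarrow> dA \<in> Aquot p i"
  by (auto simp: Aquot_def dA_def)
lemma trA_in: "a \<in> Aquot p i \<Longrightarrow> trA j a \<in> Aquot p j"
  by (auto simp: Aquot_def trA_def)

lemma tauA_sh: "a \<in> Aquot p i \<Longrightarrow> tauA p i a = addA p a (shA i a)"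
  by (auto simp: Aquot_def tauA_def addA_def shA_def fun_eq_iff)

lemma smulA_0: "smulA p 0 a = ZA" by (simp add: smulA_def ZA_def fun_eq_iff)
lemma smulA_Suc: "smulA p (Suc c) a = addA p (smulA p c a) a"
  by (simp add: smulA_def addA_def fun_eq_iff mod_add_right_eq add.commute)

lemma decomp: "a \<in> Aquot p i \<Longrightarrow> 1 \<le> i \<Longrightarrow> 1 < p \<Longrightarrow> a = addA p (smulA p (a 0) dA) (shA i (dnA a))"
  by (auto simp: Aquot_def addA_def smulA_def dA_def shA_def dnA_def fun_eq_iff)

lemma decomp0: "a \<in> Aquot p i \<Longrightarrow> a 0 = 0 \<Longrightarrow> a = shA i (dnA a)"
  by (auto simp: Aquot_def shA_def dnA_def fun_eq_iff)

lemma Aquot_mono: "a \<in> Aquot p j \<Longrightarrow> j \<le> i \<Longrightarrow> a \<in> Aquot p i"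
  by (auto simp: Aquot_def)



lemma carrier_B: "carrier (Bgrp p i e) = Aquot p i \<times> {..<p}" by (simp add: Bgrp_def)
lemma mult_B: "monoid.mult (Bgrp p i e) = multB p i e" by (simp add: Bgrp_def)
lemma one_B: "one (Bgrp p i e) = (ZA, 0)" by (simp add: Bgrp_def ZA_def)

lemma addA_in_lam0: "addA p (addA p a b) (\<lambda>_. 0) = addA p a b"
  by (simp add: addA_def)

lemma multB_00: "a \<in> Aquot p i \<Longrightarrow> b \<in> Aquot p i \<Longrightarrow> 0 < p \<Longrightarrow>
  multB p i e (a,0) (b,0) = (addA p a b, 0)"
  by (simp add: multB_def addA_in_lam0)

lemma multB_s_a: "a \<in> Aquot p i \<Longrightarrow> 1 < p \<Longrightarrow>
  multB p i e (b,1) (a,0) = (addA p b (tauA p i a), 1)"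
  by (simp add: multB_def addA_in_lam0 tauA_in)

lemma multB_a_s: "a \<in> Aquot p i \<Longrightarrow> b \<in> Aquot p i \<Longrightarrow> 1 < p \<Longrightarrow>
  multB p i e (a,0) (b,1) = (addA p a b, 1)"
  by (simp add: multB_def addA_in_lam0)


primrec pwB :: "nat \<Rightarrow> nat \<Rightarrow> nat \<Rightarrow> ((nat \<Rightarrow> nat) \<times> nat) \<Rightarrow> nat \<Rightarrow> ((nat \<Rightarrow> nat) \<times> nat)" where
  "pwB p i e x 0 = (ZA, 0)"
| "pwB p i e x (Suc m) = multB p i e x (pwB p i e x m)"

lemma cocyc_in: "e < p \<Longrightarrow> 1 \<le> i \<Longrightarrow> cocyc i e \<in> Aquot p i"
  by (auto simp: Aquot_def cocyc_def)

lemma multB_closed: "0 < p \<Longrightarrow> e < p \<Longrightarrow> 1 \<le> i \<Longrightarrow> x \<in> carrier (Bgrp p i e) \<Longrightarrow>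
  y \<in> carrier (Bgrp p i e) \<Longrightarrow> multB p i e x y \<in> carrier (Bgrp p i e)"
  by (cases x, cases y) (auto simp: carrier_B multB_def intro!: addA_in tauA_funpow_in cocyc_in ZA_in[unfolded ZA_def])

lemma pwB_closed: "0 < p \<Longrightarrow> e < p \<Longrightarrow> 1 \<le> i \<Longrightarrow> x \<in> carrier (Bgrp p i e) \<Longrightarrow>
  pwB p i e x m \<in> carrier (Bgrp p i e)"
  by (induction m) (auto simp: carrier_B ZA_in intro: multB_closed[unfolded carrier_B])

lemma tauA_lam0: "tauA p i (\<lambda>_. 0) = (\<lambda>_. 0)"
  by (simp add: tauA_def fun_eq_iff)

lemma pw_s: "1 < p \<Longrightarrow> m < p \<Longrightarrow> pwB p i e (ZA, 1) m = (ZA, m)"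
proof (induction m)
  case 0 thus ?case by simp
next
  case (Suc m)
  thus ?case by (simp add: multB_def tauA_lam0 addA_def ZA_def)
qed

lemma pw_s_p: "1 < p \<Longrightarrow> e < p \<Longrightarrow> pwB p i e (ZA, 1) p = (cocyc i e, 0)"
proof -
  assume p: "1 < p" "e < p"
  obtain q where q: "p = Suc q" using p by (cases p) auto
  have "pwB p i e (ZA, 1) q = (ZA, q)" using pw_s p q by simp
  thus ?thesis using q p by (simp add: multB_def tauA_lam0 addA_def ZA_def cocyc_def fun_eq_iff)
qed

definition Sb :: "(nat \<Rightarrow> nat) \<Rightarrow> nat \<Rightarrow> nat \<Rightarrow> nat" where
  "Sb b m n = (\<Sum>k\<le>n. (m choose (Suc k)) * b (n - k))"

lemma Sb_Suc: "Sb b (Suc m) n = Sb b m n + b n + (if n = 0 then 0 else Sb b m (n - 1))"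
proof -
  have "Sb b (Suc m) n = (\<Sum>k\<le>n. (m choose (Suc k)) * b (n - k) + (m choose k) * b (n - k))"
    unfolding Sb_def by (intro sum.cong) (auto simp: algebra_simps)
  also have "\<dots> = Sb b m n + (\<Sum>k\<le>n. (m choose k) * b (n - k))"
    by (simp add: Sb_def sum.distrib)
  also have "(\<Sum>k\<le>n. (m choose k) * b (n - k)) = b n + (if n = 0 then 0 else Sb b m (n - 1))"
  proof (cases n)
    case 0 thus ?thesis by simp
  next
    case (Suc n')
    have "(\<Sum>k\<le>n. (m choose k) * b (n - k)) = (m choose 0) * b n + (\<Sum>k\<le>n'. (m choose Suc k) * b (n - Suc k))"
      unfolding Suc by (subst sum.atMost_Suc_shift) simp
    thus ?thesis using Suc by (simp add: Sb_def)
  qed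
  finally show ?thesis by simp
qed

definition Qb :: "nat \<Rightarrow> nat \<Rightarrow> (nat \<Rightarrow> nat) \<Rightarrow> nat \<Rightarrow> nat \<Rightarrow> nat" where
  "Qb p j b m = (\<lambda>n. if n < j then Sb b m n mod p else 0)"

lemma Qb_lam0: "addA p (Qb p j b m) (\<lambda>_. 0) = Qb p j b m"
  by (simp add: addA_def Qb_def fun_eq_iff)

lemma Qb_Suc: "b \<in> Aquot p j \<Longrightarrow> addA p b (tauA p j (Qb p j b m)) = Qb p j b (Suc m)"
  apply (rule ext)
  apply (auto simp: addA_def tauA_def Qb_def Sb_Suc Aquot_def mod_add_left_eq mod_add_right_eq add_ac)
  apply (metis mod_add_right_eq add.assoc add.commute)
  done

lemma Qb_0: "Qb p j b 0 = ZA"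
  by (simp add: Qb_def Sb_def ZA_def fun_eq_iff)

lemma pw_y: "1 < p \<Longrightarrow> b \<in> Aquot p j \<Longrightarrow> m < p \<Longrightarrow> pwB p j e (b, 1) m = (Qb p j b m, m)"
proof (induction m)
  case 0 thus ?case by (simp add: Qb_0)
next
  case (Suc m)
  thus ?case using Qb_Suc[OF Suc.prems(2), of m] by (simp add: multB_def Qb_lam0)
qed

lemma Qb_p: "Factorial_Ring.prime p \<Longrightarrow> j < p \<Longrightarrow> Qb p j b p = ZA"
proof (rule ext)
  fix n assume pr: "Factorial_Ring.prime p" and jp: "j < p"
  show "Qb p j b p n = ZA n"
  proof (cases "n < j")
    case True
    have "p dvd Sb b p n" unfolding Sb_def
    proof (intro dvd_sum)
      fix k assume "k \<in> {..n}"
      hence "Suc k < p" using True jp by auto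
      hence "p dvd (p choose Suc k)" using pr by (intro dvd_choose_prime) auto
      thus "p dvd (p choose Suc k) * b (n - k)" by simp
    qed
    thus ?thesis using True by (simp add: Qb_def ZA_def)
  qed (simp add: Qb_def ZA_def)
qed

lemma pw_y_p: "Factorial_Ring.prime p \<Longrightarrow> j < p \<Longrightarrow> e < p \<Longrightarrow> b \<in> Aquot p j \<Longrightarrow>
   pwB p j e (b, 1) p = (cocyc j e, 0)"
proof -
  assume pr: "Factorial_Ring.prime p" and jp: "j < p" and ep: "e < p" and b: "b \<in> Aquot p j"
  have p1: "1 < p" using pr prime_gt_1_nat by blast
  obtain q where q: "p = Suc q" using p1 by (cases p) auto
  have "pwB p j e (b, 1) q = (Qb p j b q, q)" using pw_y p1 b q by simp
  hence "pwB p j e (b, 1) p = (addA p (Qb p j b p) (cocyc j e), 0)"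
    using q Qb_Suc[OF b, of q] by (simp add: multB_def)
  also have "\<dots> = (cocyc j e, 0)" using Qb_p[OF pr jp] ep by (simp add: addA_def ZA_def cocyc_def fun_eq_iff)
  finally show ?thesis .
qed


context
  fixes p i j e e' and \<phi> :: "(nat \<Rightarrow> nat) \<times> nat \<Rightarrow> (nat \<Rightarrow> nat) \<times> nat"
  assumes pr: "Factorial_Ring.prime p" and i1: "1 \<le> i" and ip: "i \<le> p" and j1: "1 \<le> j" and jp: "j \<le> p"
    and ep: "e < p" and e'p: "e' < p"
    and hom: "\<phi> \<in> hom (Bgrp p i e) (Bgrp p j e')"
    and sur: "\<phi> ` carrier (Bgrp p i e) = carrier (Bgrp p j e')"
    and prj: "\<forall>x \<in> carrier (Bgrp p i e). projG (\<phi> x) = projG x"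
begin

definition "ff a = fst (\<phi> (a, 0))"

lemma p1: "1 < p" using pr prime_gt_1_nat by blast
lemma p0: "0 < p" using p1 by simp

lemma phi_car: "x \<in> carrier (Bgrp p i e) \<Longrightarrow> \<phi> x \<in> carrier (Bgrp p j e')"
  by (rule hom_in_carrier[OF hom])

lemma phi_mult: "x \<in> carrier (Bgrp p i e) \<Longrightarrow> y \<in> carrier (Bgrp p i e) \<Longrightarrow>
   \<phi> (multB p i e x y) = multB p j e' (\<phi> x) (\<phi> y)"
  using hom hom_mult[of \<phi> "Bgrp p i e" "Bgrp p j e'" x y] by (simp add: mult_B)

lemma phi0: "a \<in> Aquot p i \<Longrightarrow> \<phi> (a,0) = (ff a, 0)"
proof -
  assume a: "a \<in> Aquot p i"
  hence c: "(a,0) \<in> carrier (Bgrp p i e)" using p0 by (simp add: carrier_B)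
  have "projG (\<phi> (a,0)) = 0" using prj c by (simp add: projG_def)
  thus ?thesis by (simp add: ff_def projG_def prod_eq_iff)
qed

lemma ff_in: "a \<in> Aquot p i \<Longrightarrow> ff a \<in> Aquot p j"
proof -
  assume a: "a \<in> Aquot p i"
  hence c: "(a,0) \<in> carrier (Bgrp p i e)" using p0 by (simp add: carrier_B)
  from phi_car[OF c] show ?thesis using phi0[OF a] by (simp add: carrier_B)
qed

lemma ff_add: "a \<in> Aquot p i \<Longrightarrow> b \<in> Aquot p i \<Longrightarrow> ff (addA p a b) = addA p (ff a) (ff b)"
proof -
  assume a: "a \<in> Aquot p i" and b: "b \<in> Aquot p i"
  have "\<phi> (multB p i e (a,0) (b,0)) = multB p j e' (\<phi> (a,0)) (\<phi> (b,0))"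
    using a b p0 by (intro phi_mult) (auto simp: carrier_B)
  thus ?thesis using a b p0 ff_in by (simp add: multB_00 phi0 addA_in)
qed

lemma ff_ZA: "ff ZA = ZA"
proof -
  have z: "ZA \<in> Aquot p i" "ff ZA \<in> Aquot p j" using ZA_in[OF p0] ff_in[OF ZA_in[OF p0]] by auto
  have "ff (addA p ZA ZA) = addA p (ff ZA) (ff ZA)" using ff_add z by blast
  hence "ff ZA = addA p (ff ZA) (ff ZA)" using z by (simp add: addA_ZA)
  moreover have "ff ZA = addA p ZA (ff ZA)" using z addA_ZA' by metis
  ultimately have "addA p ZA (ff ZA) = addA p (ff ZA) (ff ZA)" by simp
  thus ?thesis using addA_cancel[of ZA p j "ff ZA" "ff ZA"] ZA_in[OF p0] z by metis
qed

lemma ff_tau: "a \<in> Aquot p i \<Longrightarrow> ff (tauA p i a) = tauA p j (ff a)"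
proof -
  assume a: "a \<in> Aquot p i"
  have sc: "(ZA, 1) \<in> carrier (Bgrp p i e)" using p1 ZA_in[OF p0] by (simp add: carrier_B)
  have s1: "snd (\<phi> (ZA,1)) = 1" using prj[rule_format, OF sc] by (simp add: projG_def)
  obtain b where b: "\<phi> (ZA,1) = (b,1)" "b \<in> Aquot p j"
    using s1 phi_car[OF sc] by (cases "\<phi> (ZA,1)") (auto simp: carrier_B)
  have ta: "tauA p i a \<in> Aquot p i" using tauA_in p0 by blast
  have e1: "multB p i e (ZA,1) (a,0) = (tauA p i a, 1)"
    using multB_s_a[OF a p1] ta by (simp add: addA_ZA')
  have e2: "multB p i e (tauA p i a,0) (ZA,1) = (tauA p i a, 1)"
    using multB_a_s[OF ta ZA_in[OF p0] p1] ta by (simp add: addA_ZA)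
  have "\<phi> (multB p i e (ZA,1) (a,0)) = \<phi> (multB p i e (tauA p i a,0) (ZA,1))" using e1 e2 by simp
  hence "multB p j e' (b,1) (ff a, 0) = multB p j e' (ff (tauA p i a), 0) (b,1)"
    using phi_mult sc a ta p0 b phi0 by (simp add: carrier_B)
  hence "addA p b (tauA p j (ff a)) = addA p (ff (tauA p i a)) b"
    using multB_s_a[OF ff_in[OF a] p1] multB_a_s[OF ff_in[OF ta] b(2) p1] by simp
  hence "addA p (tauA p j (ff a)) b = addA p (ff (tauA p i a)) b" by (simp add: addA_comm)
  thus ?thesis using addA_cancel tauA_in[OF p0] ff_in[OF ta] by metis
qed

lemma ff_sh: "a \<in> Aquot p i \<Longrightarrow> ff (shA i a) = shA j (ff a)"
proof -
  assume a: "a \<in> Aquot p i"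
  have s: "shA i a \<in> Aquot p i" using shA_in[OF a] .
  have "ff (tauA p i a) = addA p (ff a) (ff (shA i a))" using tauA_sh[OF a] ff_add[OF a s] by simp
  moreover have "tauA p j (ff a) = addA p (ff a) (shA j (ff a))" using tauA_sh[OF ff_in[OF a]] .
  ultimately have "addA p (ff (shA i a)) (ff a) = addA p (shA j (ff a)) (ff a)"
    using ff_tau[OF a] by (simp add: addA_comm)
  thus ?thesis using addA_cancel ff_in[OF s] shA_in[OF ff_in[OF a]] by metis
qed

lemma ff_smul: "a \<in> Aquot p i \<Longrightarrow> ff (smulA p c a) = smulA p c (ff a)"
proof (induction c)
  case 0 thus ?case by (simp add: smulA_0 ff_ZA)
next
  case (Suc c)
  thus ?case using ff_add[OF smulA_in[OF p0 Suc.prems] Suc.prems] by (simp add: smulA_Suc)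
qed

definition "gg = ff dA"

lemma ff_at0: "a \<in> Aquot p i \<Longrightarrow> ff a 0 = (a 0 * gg 0) mod p"
proof -
  assume a: "a \<in> Aquot p i"
  have "ff a = ff (addA p (smulA p (a 0) dA) (shA i (dnA a)))" using decomp[OF a i1 p1] by simp
  also have "\<dots> = addA p (smulA p (a 0) gg) (shA j (ff (dnA a)))"
    using ff_add[OF smulA_in[OF p0 dA_in[OF p1 i1]] shA_in[OF dnA_in[OF a]]]
      ff_smul[OF dA_in[OF p1 i1]] ff_sh[OF dnA_in[OF a]] by (simp add: gg_def)
  finally show ?thesis by (simp add: addA_def smulA_def shA_def)
qed

lemma gg0: "gg 0 \<noteq> 0"
proof
  assume g: "gg 0 = 0"
  have "(dA, 0) \<in> carrier (Bgrp p j e')" using dA_in[OF p1 j1] p0 by (simp add: carrier_B)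
  then obtain x where x: "x \<in> carrier (Bgrp p i e)" "\<phi> x = (dA, 0)" using sur by force
  obtain a k where ak: "x = (a,k)" by force
  have "k = 0" using prj[rule_format, OF x(1)] x ak by (simp add: projG_def)
  hence "ff a = dA" using x ak phi0 by (simp add: carrier_B)
  moreover have "ff a 0 = 0" using ff_at0 x ak g by (simp add: carrier_B)
  ultimately show False by (simp add: dA_def)
qed

lemma ff_at0_zero: "a \<in> Aquot p i \<Longrightarrow> ff a 0 = 0 \<Longrightarrow> a 0 = 0"
proof -
  assume a: "a \<in> Aquot p i" and z: "ff a 0 = 0"
  hence "p dvd a 0 * gg 0" using ff_at0 by (simp add: dvd_eq_mod_eq_0)
  hence "p dvd a 0 \<or> p dvd gg 0" using pr by (simp add: prime_dvd_mult_iff)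
  moreover have "gg 0 < p" using ff_in[OF dA_in[OF p1 i1]] by (simp add: gg_def Aquot_def)
  moreover have "a 0 < p" using a by (simp add: Aquot_def)
  ultimately show ?thesis using gg0 by (meson dvd_imp_le not_gr0 not_le)
qed

lemma ff_dn: "a \<in> Aquot p i \<Longrightarrow> a 0 = 0 \<Longrightarrow> ff a = shA j (ff (dnA a))"
  by (metis decomp0 dnA_in ff_sh)

lemma ker_sub: "n \<le> j \<Longrightarrow> a \<in> Aquot p i \<Longrightarrow> (\<forall>m<n. ff a m = 0) \<Longrightarrow> (\<forall>m<n. a m = 0)"
proof (induction n arbitrary: a)
  case 0 thus ?case by simp
next
  case (Suc n)
  have a0: "a 0 = 0" using Suc.prems ff_at0_zero by blast
  have "\<forall>m<n. ff (dnA a) m = 0"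
  proof (intro allI impI)
    fix m assume "m < n"
    hence "ff a (Suc m) = 0" "Suc m < j" using Suc.prems by auto
    thus "ff (dnA a) m = 0" using ff_dn[OF Suc.prems(2) a0] by (simp add: shA_def)
  qed
  hence "\<forall>m<n. dnA a m = 0" using Suc.IH[OF _ dnA_in[OF Suc.prems(2)]] Suc.prems by simp
  thus ?case using a0 by (simp add: dnA_def) (metis less_Suc_eq_0_disj)
qed

lemma ker_sup: "a \<in> Aquot p i \<Longrightarrow> (\<forall>m<n. a m = 0) \<Longrightarrow> (\<forall>m<n. ff a m = 0)"
proof (induction n arbitrary: a)
  case 0 thus ?case by simp
next
  case (Suc n)
  have a0: "a 0 = 0" using Suc.prems by blast
  have "\<forall>m<n. dnA a m = 0" using Suc.prems by (simp add: dnA_def)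
  hence d: "\<forall>m<n. ff (dnA a) m = 0" using Suc.IH[OF dnA_in[OF Suc.prems(1)]] by simp
  have fa: "ff a = shA j (ff (dnA a))" using ff_dn[OF Suc.prems(1) a0] .
  show ?case
  proof (intro allI impI)
    fix m assume m: "m < Suc n"
    show "ff a m = 0"
    proof (cases m)
      case 0 thus ?thesis using fa by (simp add: shA_def)
    next
      case (Suc m')
      hence "m' < n" using m by simp
      thus ?thesis using fa d Suc by (simp add: shA_def)
    qed
  qed
qed

lemma ff_zero_iff: "a \<in> Aquot p i \<Longrightarrow> ff a = ZA \<longleftrightarrow> (\<forall>m<j. a m = 0)"
proof
  assume a: "a \<in> Aquot p i" "ff a = ZA"
  thus "\<forall>m<j. a m = 0" using ker_sub[of j a] by (simp add: ZA_def)
next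
  assume a: "a \<in> Aquot p i" "\<forall>m<j. a m = 0"
  hence "\<forall>m<j. ff a m = 0" using ker_sup by blast
  moreover have "\<forall>m\<ge>j. ff a m = 0" using ff_in[OF a(1)] by (simp add: Aquot_def)
  ultimately show "ff a = ZA" by (auto simp: ZA_def fun_eq_iff not_less[symmetric])
qed

lemma kernel_eq: "kernel (Bgrp p i e) (Bgrp p j e') \<phi> = AjAi p i j"
proof -
  have "x \<in> kernel (Bgrp p i e) (Bgrp p j e') \<phi> \<longleftrightarrow> x \<in> AjAi p i j" for x
  proof (cases x)
    case (Pair a k)
    show ?thesis
    proof
      assume x: "x \<in> kernel (Bgrp p i e) (Bgrp p j e') \<phi>"
      hence c: "x \<in> carrier (Bgrp p i e)" "\<phi> x = (ZA, 0)" by (auto simp: kernel_def one_B)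
      hence "k = 0" using prj Pair by (force simp: projG_def)
      thus "x \<in> AjAi p i j" using c Pair phi0 ff_zero_iff by (auto simp: carrier_B AjAi_def)
    next
      assume "x \<in> AjAi p i j"
      thus "x \<in> kernel (Bgrp p i e) (Bgrp p j e') \<phi>" using Pair phi0 ff_zero_iff p0
        by (auto simp: carrier_B AjAi_def kernel_def one_B)
    qed
  qed
  thus ?thesis by blast
qed


lemma AjAi_triv: "\<not> j < i \<Longrightarrow> AjAi p i j = {(ZA, 0)}"
proof
  assume ji: "\<not> j < i"
  show "AjAi p i j \<subseteq> {(ZA, 0)}"
  proof
    fix x assume "x \<in> AjAi p i j"
    then obtain a where a: "x = (a,0)" "a \<in> Aquot p i" "\<forall>n<j. a n = 0" by (auto simp: AjAi_def)
    have "a n = 0" for n using a ji by (cases "n < j") (auto simp: Aquot_def)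
    thus "x \<in> {(ZA, 0)}" using a by (auto simp: ZA_def fun_eq_iff)
  qed
  show "{(ZA, 0)} \<subseteq> AjAi p i j" using ZA_in[OF p0] by (auto simp: AjAi_def ZA_def)
qed

lemma j_lt_i: "kernel (Bgrp p i e) (Bgrp p j e') \<phi> \<noteq> {\<one>\<^bsub>Bgrp p i e\<^esub>} \<Longrightarrow> j < i"
proof (rule ccontr)
  assume k: "kernel (Bgrp p i e) (Bgrp p j e') \<phi> \<noteq> {\<one>\<^bsub>Bgrp p i e\<^esub>}" and "\<not> j < i"
  hence "kernel (Bgrp p i e) (Bgrp p j e') \<phi> = {(ZA, 0)}" using kernel_eq AjAi_triv by simp
  thus False using k by (simp add: one_B)
qed

lemma phi_pw: "x \<in> carrier (Bgrp p i e) \<Longrightarrow> \<phi> (pwB p i e x m) = pwB p j e' (\<phi> x) m"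
proof (induction m)
  case 0 thus ?case using phi0[OF ZA_in[OF p0]] ff_ZA by simp
next
  case (Suc m)
  thus ?case using phi_mult[OF Suc.prems pwB_closed[OF p0 ep i1 Suc.prems]] by simp
qed

lemma e'_zero: "j < i \<Longrightarrow> e' = 0"
proof -
  assume ji: "j < i"
  have sc: "(ZA, 1) \<in> carrier (Bgrp p i e)" using p1 ZA_in[OF p0] by (simp add: carrier_B)
  have s1: "snd (\<phi> (ZA,1)) = 1" using prj[rule_format, OF sc] by (simp add: projG_def)
  obtain b where b: "\<phi> (ZA,1) = (b,1)" "b \<in> Aquot p j"
    using s1 phi_car[OF sc] by (cases "\<phi> (ZA,1)") (auto simp: carrier_B)
  have ci: "cocyc i e \<in> Aquot p i" using cocyc_in ep i1 by blast
  have "ff (cocyc i e) = ZA" using ff_zero_iff[OF ci] ji by (auto simp: cocyc_def)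
  hence "\<phi> (pwB p i e (ZA,1) p) = (ZA, 0)" using pw_s_p[OF p1 ep] phi0[OF ci] by simp
  moreover have "\<phi> (pwB p i e (ZA,1) p) = (cocyc j e', 0)"
    using phi_pw[OF sc] b pw_y_p[OF pr _ e'p b(2)] ji ip by simp
  ultimately have "cocyc j e' (j - 1) = ZA (j - 1)" by simp
  thus ?thesis by (simp add: cocyc_def ZA_def)
qed

end

lemma trA_add: "trA j (addA p a b) = addA p (trA j a) (trA j b)"
  by (simp add: trA_def addA_def fun_eq_iff)
lemma trA_tau: "j \<le> i \<Longrightarrow> trA j (tauA p i a) = tauA p j (trA j a)"
  by (auto simp: trA_def tauA_def fun_eq_iff)
lemma trA_taupow: "j \<le> i \<Longrightarrow> trA j ((tauA p i ^^ k) a) = (tauA p j ^^ k) (trA j a)"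
  by (induction k) (auto simp: trA_tau)
lemma trA_cocyc: "j < i \<Longrightarrow> trA j (cocyc i e) = (\<lambda>_. 0)"
  by (auto simp: trA_def cocyc_def fun_eq_iff)
lemma trA_lam0: "trA j (\<lambda>_. 0) = (\<lambda>_. 0)"
  by (auto simp: trA_def fun_eq_iff)
lemma cocyc_0: "cocyc j 0 = (\<lambda>_. 0)"
  by (auto simp: cocyc_def fun_eq_iff)

lemma part2:
  assumes p1: "1 < p" and j1: "1 \<le> j" and ji: "j < i" and ip: "i \<le> p" and ep: "e < p"
  shows "\<exists>\<phi>. \<phi> \<in> hom (Bgrp p i e) (Bgrp p j 0)
               \<and> \<phi> ` carrier (Bgrp p i e) = carrier (Bgrp p j 0)
               \<and> (\<forall>x \<in> carrier (Bgrp p i e). projG (\<phi> x) = projG x)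
               \<and> kernel (Bgrp p i e) (Bgrp p j 0) \<phi> = AjAi p i j"
proof (intro exI conjI)
  let ?psi = "\<lambda>x. (trA j (fst x), snd x)"
  show "?psi \<in> hom (Bgrp p i e) (Bgrp p j 0)"
  proof (unfold hom_def, intro CollectI conjI ballI)
    show "?psi \<in> carrier (Bgrp p i e) \<rightarrow> carrier (Bgrp p j 0)"
      by (auto simp: carrier_B trA_in)
  next
    fix x y assume "x \<in> carrier (Bgrp p i e)" "y \<in> carrier (Bgrp p i e)"
    show "?psi (x \<otimes>\<^bsub>Bgrp p i e\<^esub> y) = ?psi x \<otimes>\<^bsub>Bgrp p j 0\<^esub> ?psi y"
      using ji by (simp add: mult_B multB_def trA_add trA_taupow trA_cocyc trA_lam0 cocyc_0)
  qed
  show "?psi ` carrier (Bgrp p i e) = carrier (Bgrp p j 0)"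
  proof
    show "?psi ` carrier (Bgrp p i e) \<subseteq> carrier (Bgrp p j 0)" by (auto simp: carrier_B trA_in)
    show "carrier (Bgrp p j 0) \<subseteq> ?psi ` carrier (Bgrp p i e)"
    proof
      fix y assume y: "y \<in> carrier (Bgrp p j 0)"
      hence c: "y \<in> carrier (Bgrp p i e)" using ji by (auto simp: carrier_B intro: Aquot_mono)
      have "trA j (fst y) = fst y" using y by (auto simp: carrier_B Aquot_def trA_def fun_eq_iff)
      hence py: "?psi y = y" by (cases y) simp
      show "y \<in> ?psi ` carrier (Bgrp p i e)" by (rule image_eqI[where f="?psi", OF py[symmetric] c])
    qed
  qed
  show "\<forall>x \<in> carrier (Bgrp p i e). projG (?psi x) = projG x" by (simp add: projG_def)
  show "kernel (Bgrp p i e) (Bgrp p j 0) ?psi = AjAi p i j"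
  proof -
    have "trA j a = (\<lambda>_. 0) \<longleftrightarrow> (\<forall>n<j. a n = 0)" for a :: "nat \<Rightarrow> nat"
      by (auto simp: trA_def fun_eq_iff)
    thus ?thesis using p1 by (auto simp: kernel_def carrier_B one_B AjAi_def ZA_def)
  qed
qed

theorem lemma2:
  fixes p :: nat
  assumes "Factorial_Ring.prime p" and "odd p"
  shows "(\<forall>i j e e' (\<phi> :: (nat \<Rightarrow> nat) \<times> nat \<Rightarrow> (nat \<Rightarrow> nat) \<times> nat).
            1 \<le> i \<and> i \<le> p \<and> 1 \<le> j \<and> j \<le> p \<and> e < p \<and> e' < p
            \<and> \<phi> \<in> hom (Bgrp p i e) (Bgrp p j e')
            \<and> \<phi> ` carrier (Bgrp p i e) = carrier (Bgrp p j e')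
            \<and> (\<forall>x \<in> carrier (Bgrp p i e). projG (\<phi> x) = projG x)
            \<and> kernel (Bgrp p i e) (Bgrp p j e') \<phi> \<noteq> {\<one>\<^bsub>Bgrp p i e\<^esub>}
          \<longrightarrow> j < i \<and> e' = 0 \<and> kernel (Bgrp p i e) (Bgrp p j e') \<phi> = AjAi p i j)
       \<and> (\<forall>i j e. 1 \<le> j \<and> j < i \<and> i \<le> p \<and> e < p \<longrightarrow>
            (\<exists>\<phi>. \<phi> \<in> hom (Bgrp p i e) (Bgrp p j 0)
               \<and> \<phi> ` carrier (Bgrp p i e) = carrier (Bgrp p j 0)
               \<and> (\<forall>x \<in> carrier (Bgrp p i e). projG (\<phi> x) = projG x)
               \<and> kernel (Bgrp p i e) (Bgrp p j 0) \<phi> = AjAi p i j))"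
  proof (rule conjI; intro allI impI)
  fix i j e e' and \<phi> :: "(nat \<Rightarrow> nat) \<times> nat \<Rightarrow> (nat \<Rightarrow> nat) \<times> nat"
  assume H: "1 \<le> i \<and> i \<le> p \<and> 1 \<le> j \<and> j \<le> p \<and> e < p \<and> e' < p
            \<and> \<phi> \<in> hom (Bgrp p i e) (Bgrp p j e')
            \<and> \<phi> ` carrier (Bgrp p i e) = carrier (Bgrp p j e')
            \<and> (\<forall>x \<in> carrier (Bgrp p i e). projG (\<phi> x) = projG x)
            \<and> kernel (Bgrp p i e) (Bgrp p j e') \<phi> \<noteq> {\<one>\<^bsub>Bgrp p i e\<^esub>}"
  from H have h: "1 \<le> i" "i \<le> p" "1 \<le> j" "j \<le> p" "e < p" "e' < p"
    "\<phi> \<in> hom (Bgrp p i e) (Bgrp p j e')"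
    "\<phi> ` carrier (Bgrp p i e) = carrier (Bgrp p j e')"
    "\<forall>x \<in> carrier (Bgrp p i e). projG (\<phi> x) = projG x"
    "kernel (Bgrp p i e) (Bgrp p j e') \<phi> \<noteq> {\<one>\<^bsub>Bgrp p i e\<^esub>}" by auto
  have ji: "j < i" by (rule j_lt_i[OF assms(1) h])
  have e0: "e' = 0" by (rule e'_zero[OF assms(1) h(1-9) ji])
  have k: "kernel (Bgrp p i e) (Bgrp p j e') \<phi> = AjAi p i j" by (rule kernel_eq[OF assms(1) h(1-9)])
  show "j < i \<and> e' = 0 \<and> kernel (Bgrp p i e) (Bgrp p j e') \<phi> = AjAi p i j"
    using ji e0 k by blast
next
  fix i j e :: nat
  assume A: "1 \<le> j \<and> j < i \<and> i \<le> p \<and> e < p"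
  show "\<exists>\<phi>. \<phi> \<in> hom (Bgrp p i e) (Bgrp p j 0)
               \<and> \<phi> ` carrier (Bgrp p i e) = carrier (Bgrp p j 0)
               \<and> (\<forall>x \<in> carrier (Bgrp p i e). projG (\<phi> x) = projG x)
               \<and> kernel (Bgrp p i e) (Bgrp p j 0) \<phi> = AjAi p i j"
    by (rule part2) (use A prime_gt_1_nat[OF assms(1)] in auto)
qed

end
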